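(* Let $N\ge2$ and let $\mathcal F_{M,N}$ be the free $\Bbbk$-module on symbols $\bar M_0,\dots,\bar M_{N-1}$. For $l,m,k\ge0$ with $l+m+k+1=N$ put $Z_M^{l,m,k}:=\sum_{j=0}^m(-1)^j\binom mj\bar M_{l+j}$. For $0\le k\le\lfloor N/2\rfloor-1$ put $X_k:=Z_M^{k,k+1,N-2k-2}-Z_M^{k+1,k,N-2k-2}$, and for $j\ge0$, $s\ge1$ with $2j+s\le N-1$ put $X_j^{(s)}:=Z_M^{j,j+s,N-2j-s-1}-Z_M^{j+s,j,N-2j-s-1}$. Then: (i) $X_j^{(s)}=\sum_{k=0}^{\lfloor (s-1)/2\rfloor}(-1)^k\binom{s-k-1}{k}X_{j+k}$ for all such $j,s$; (ii) $X_0,\dots,X_{\lfloor N/2\rfloor-1}$ are $\Bbbk$-linearly independent in $\mathcal F_{M,N}$; (iii) the assignment $Z^{l,m,k}\mapsto$ (class of $Z_M^{l,m,k}$) extends to a well-defined isomorphism of $\Bbbk$-modules $\mathcal{ZF}_N\xrightarrow{\sim}\mathcal F_{M,N}/\langle X_0,\dots,X_{\lfloor N/2\rfloor-1}\rangle$.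
   Context: $\Bbbk$ is a commutative ring. $\mathcal F_N$ is the free $\Bbbk$-module on symbols $F^{l,m,k}$, $l,m,k\ge0$, $l+m+k+1=N$; $\mathcal{ZF}_N:=\mathcal F_N/I$ with $I$ generated by all $F^{l,m,k}-F^{m,l,k}$ and all $F^{l,m+1,k}+F^{l+1,m,k}-F^{l,m,k+1}$; $Z^{l,m,k}$ denotes the image of $F^{l,m,k}$. *)

theory Defs
  imports Main
begin

text \<open>Elements of the free module F_{M,N} on symbols M_0..M_{N-1} are represented as
  coordinate functions v :: nat => 'a vanishing at indices >= N.
  Elements of the free module F_N on symbols F^{l,m,k} (l+m+k+1 = N) are represented as
  coordinate functions on triples, vanishing outside the index set.\<close>

definition FM :: "nat \<Rightarrow> (nat \<Rightarrow> 'a::comm_ring_1) set" where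
  "FM N = {v. \<forall>i\<ge>N. v i = 0}"

definition basisM :: "nat \<Rightarrow> nat \<Rightarrow> 'a::comm_ring_1" where
  "basisM i = (\<lambda>x. if x = i then 1 else 0)"

definition ZM :: "nat \<Rightarrow> nat \<Rightarrow> nat \<Rightarrow> nat \<Rightarrow> 'a::comm_ring_1" where
  "ZM l m k = (\<lambda>x. \<Sum>j\<le>m. (-1)^j * of_nat (m choose j) * basisM (l + j) x)"

definition Xk :: "nat \<Rightarrow> nat \<Rightarrow> nat \<Rightarrow> 'a::comm_ring_1" where
  "Xk N k = (\<lambda>x. ZM k (k+1) (N - 2*k - 2) x - ZM (k+1) k (N - 2*k - 2) x)"

definition Xjs :: "nat \<Rightarrow> nat \<Rightarrow> nat \<Rightarrow> nat \<Rightarrow> 'a::comm_ring_1" where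
  "Xjs N j s = (\<lambda>x. ZM j (j+s) (N - 2*j - s - 1) x - ZM (j+s) j (N - 2*j - s - 1) x)"

definition spanX :: "nat \<Rightarrow> (nat \<Rightarrow> 'a::comm_ring_1) set" where
  "spanX N = {v. \<exists>c. v = (\<lambda>x. \<Sum>k<N div 2. c k * Xk N k x)}"

definition Tidx :: "nat \<Rightarrow> (nat \<times> nat \<times> nat) set" where
  "Tidx N = {(l,m,k). l + m + k + 1 = N}"

definition FF :: "nat \<Rightarrow> (nat \<times> nat \<times> nat \<Rightarrow> 'a::comm_ring_1) set" where
  "FF N = {a. \<forall>t. t \<notin> Tidx N \<longrightarrow> a t = 0}"

definition basisF :: "nat \<times> nat \<times> nat \<Rightarrow> nat \<times> nat \<times> nat \<Rightarrow> 'a::comm_ring_1" where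
  "basisF u = (\<lambda>t. if t = u then 1 else 0)"

definition Irel :: "nat \<Rightarrow> (nat \<times> nat \<times> nat \<Rightarrow> 'a::comm_ring_1) set" where
  "Irel N = {r. \<exists>a b. r = (\<lambda>t.
      (\<Sum>(l,m,k)\<in>Tidx N. a (l,m,k) * (basisF (l,m,k) t - basisF (m,l,k) t))
    + (\<Sum>(l,m,k)\<in>{(l,m,k). l + m + k + 2 = N}.
         b (l,m,k) * (basisF (l,m+1,k) t + basisF (l+1,m,k) t - basisF (l,m,k+1) t)))}"

definition phiZ :: "nat \<Rightarrow> (nat \<times> nat \<times> nat \<Rightarrow> 'a::comm_ring_1) \<Rightarrow> nat \<Rightarrow> 'a" where
  "phiZ N a = (\<lambda>x. \<Sum>(l,m,k)\<in>Tidx N. a (l,m,k) * ZM l m k x)"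

end

theory Submission
  imports Defs "HOL-Computational_Algebra.Polynomial"
begin
definition pA :: "'a::comm_ring_1 poly" where "pA = [:1,-1:]"
definition pB :: "'a::comm_ring_1 poly" where "pB = [:0,1:]"

lemma coeff_pA_pow: "coeff ((pA::'a::comm_ring_1 poly)^m) i = (-1)^i * of_nat (m choose i)"
proof (induction m arbitrary: i)
  case 0 then show ?case by (cases i) auto
next
  case (Suc m)
  have e: "(pA::'a poly)^Suc m = pA^m + pCons 0 (- (pA^m))"
    by (simp add: pA_def)
  show ?case
  proof (cases i)
    case 0 then show ?thesis unfolding e using Suc.IH[of 0] by simp
  next
    case (Suc i') then show ?thesis unfolding e using Suc.IH by (simp add: algebra_simps)
  qed
qed

lemma pB_pow: "(pB::'a::comm_ring_1 poly)^l = monom 1 l"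
  by (simp add: pB_def monom_power[symmetric] monom_altdef)

lemma coeff_P: "coeff ((pB::'a::comm_ring_1 poly)^l * pA^m) x =
   (if l \<le> x then (-1)^(x-l) * of_nat (m choose (x-l)) else 0)"
  by (simp add: pB_pow coeff_monom_mult coeff_pA_pow)

lemma ZM_alt: "(ZM l m k :: nat \<Rightarrow> 'a::comm_ring_1) x =
   (if l \<le> x then (-1)^(x-l) * of_nat (m choose (x-l)) else 0)"
proof -
  have "(ZM l m k :: nat \<Rightarrow> 'a) x = (\<Sum>j\<le>m. if j = x - l \<and> l \<le> x then (-1)^j * of_nat (m choose j) else 0)"
    unfolding ZM_def basisM_def by (rule sum.cong) auto
  also have "\<dots> = (if l \<le> x then (-1)^(x-l) * of_nat (m choose (x-l)) else 0)"
    by (auto simp: sum.delta' binomial_eq_0)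
  finally show ?thesis .
qed

lemma ZM_coeff: "(ZM l m k :: nat \<Rightarrow> 'a::comm_ring_1) = coeff (pB^l * pA^m)"
  by (rule ext) (simp add: ZM_alt coeff_P)

definition Tp :: "nat \<Rightarrow> 'a::comm_ring_1 \<Rightarrow> 'a" where
  "Tp n y = (\<Sum>k\<le>n. (-1)^k * of_nat ((n-k) choose k) * y^k)"

lemma Tp_rec: "Tp (Suc (Suc n)) y = Tp (Suc n) y - y * Tp n (y::'a::comm_ring_1)"
proof -
  define f where "f k = (-1)^k * of_nat ((Suc (Suc n) - k) choose k) * y^k" for k
  have pas: "(Suc n - k) choose Suc k = ((n-k) choose k) + ((n-k) choose Suc k)" if "k \<le> Suc n" for k
  proof (cases "k \<le> n")
    case True then have "Suc n - k = Suc (n-k)" by simp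
    then show ?thesis by simp
  next
    case False then have "k = Suc n" using that by simp
    then show ?thesis by simp
  qed
  have "Tp (Suc (Suc n)) y = f 0 + (\<Sum>k\<le>Suc n. f (Suc k))"
    unfolding Tp_def f_def by (rule sum.atMost_Suc_shift)
  also have "(\<Sum>k\<le>Suc n. f (Suc k)) = (\<Sum>k\<le>Suc n. (-1)^(Suc k) * of_nat ((n-k) choose k) * y^(Suc k))
       + (\<Sum>k\<le>Suc n. (-1)^(Suc k) * of_nat ((n-k) choose Suc k) * y^(Suc k))"
    unfolding f_def sum.distrib[symmetric] by (rule sum.cong) (auto simp: pas algebra_simps)
  also have "(\<Sum>k\<le>Suc n. (-1)^(Suc k) * of_nat ((n-k) choose k) * y^(Suc k)) = - y * Tp n y"
    unfolding Tp_def by (simp add: sum_distrib_left algebra_simps)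
  also have "f 0 + (- y * Tp n y + (\<Sum>k\<le>Suc n. (-1)^(Suc k) * of_nat ((n-k) choose Suc k) * y^(Suc k)))
     = (f 0 + (\<Sum>k\<le>Suc n. (-1)^(Suc k) * of_nat ((Suc n - Suc k) choose Suc k) * y^(Suc k))) - y * Tp n y"
    by simp
  also have "f 0 + (\<Sum>k\<le>Suc n. (-1)^(Suc k) * of_nat ((Suc n - Suc k) choose Suc k) * y^(Suc k))
     = (\<Sum>k\<le>Suc (Suc n). (-1)^k * of_nat ((Suc n - k) choose k) * y^k)"
    by (subst sum.atMost_Suc_shift) (simp add: f_def)
  also have "\<dots> = Tp (Suc n) y"
    unfolding Tp_def by simp
  finally show ?thesis .
qed

lemma pow_diff_Tp:
  fixes a b :: "'a::comm_ring_1"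
  assumes "a + b = 1"
  shows "a^(Suc n) - b^(Suc n) = (a - b) * Tp n (a*b)"
proof -
  have "a^(Suc n) - b^(Suc n) = (a - b) * Tp n (a*b) \<and> a^(Suc (Suc n)) - b^(Suc (Suc n)) = (a - b) * Tp (Suc n) (a*b)"
  proof (induction n)
    case 0
    have "a^2 - b^2 = (a-b)*(a+b)" by (simp add: algebra_simps power2_eq_square)
    then show ?case using assms by (simp add: Tp_def numeral_2_eq_2)
  next
    case (Suc n)
    have "a^(Suc (Suc (Suc n))) - b^(Suc (Suc (Suc n))) =
        (a+b) * (a^(Suc (Suc n)) - b^(Suc (Suc n))) - a*b*(a^(Suc n) - b^(Suc n))"
      by (simp add: algebra_simps)
    also have "\<dots> = 1 * ((a-b)*Tp (Suc n) (a*b)) - a*b*((a-b)*Tp n (a*b))"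
      using Suc assms by simp
    also have "\<dots> = (a-b)*(Tp (Suc n) (a*b) - a*b*Tp n (a*b))" by (simp add: algebra_simps)
    also have "\<dots> = (a - b) * Tp (Suc (Suc n)) (a*b)" by (simp add: Tp_rec)
    finally show ?case using Suc by simp
  qed
  then show ?thesis by simp
qed

lemma Tp_div2: "Tp n y = (\<Sum>k\<le>n div 2. (-1)^k * of_nat ((n-k) choose k) * (y::'a::comm_ring_1)^k)"
  unfolding Tp_def
proof (rule sum.mono_neutral_right)
  show "\<forall>i\<in>{..n} - {..n div 2}. (-1)^i * of_nat ((n-i) choose i) * y^i = 0"
  proof
    fix i assume "i \<in> {..n} - {..n div 2}"
    then have "n - i < i" by auto
    then show "(-1)^i * of_nat ((n-i) choose i) * y^i = 0" by (simp add: binomial_eq_0)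
  qed
qed auto


lemma smult_sum_right: "smult a (\<Sum>i\<in>S. f i) = (\<Sum>i\<in>S. smult a (f i))"
  by (induction S rule: infinite_finite_induct) (auto simp: smult_add_right)

lemma minus_one_pow_poly: "((-1)^k :: 'a::comm_ring_1 poly) = [:(-1)^k:]"
  by (induction k) (auto simp: algebra_simps)

lemma const_mult_poly: "((-1)^k * of_nat m :: 'a::comm_ring_1 poly) * p = smult ((-1)^k * of_nat m) p"
  by (simp add: minus_one_pow_poly of_nat_poly ac_simps)

definition Qp :: "nat \<Rightarrow> 'a::comm_ring_1 poly" where
  "Qp k = pB^k * pA^(k+1) - pB^(k+1) * pA^k"

lemma Qp_alt: "Qp k = (pA*pB)^k * (pA - pB)"
  by (simp add: Qp_def power_mult_distrib algebra_simps)

lemma pA_pB_sum: "(pA::'a::comm_ring_1 poly) + pB = 1"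
  by (simp add: pA_def pB_def one_pCons)

lemma Xk_coeff: "(Xk N k :: nat \<Rightarrow> 'a::comm_ring_1) = coeff (Qp k)"
  by (rule ext) (simp add: Xk_def Qp_def ZM_coeff)

lemma Xjs_coeff: "(Xjs N j s :: nat \<Rightarrow> 'a::comm_ring_1) = coeff (pB^j * pA^(j+s) - pB^(j+s) * pA^j)"
  by (rule ext) (simp add: Xjs_def ZM_coeff)

lemma pid:
  assumes "1 \<le> s"
  shows "(pB::'a::comm_ring_1 poly)^j * pA^(j+s) - pB^(j+s) * pA^j =
    (\<Sum>k\<le>(s - 1) div 2. smult ((-1)^k * of_nat ((s - k - 1) choose k)) (Qp (j+k)))"
proof -
  obtain n where s: "s = Suc n" using assms by (cases s) auto
  have "(pB::'a poly)^j * pA^(j+s) - pB^(j+s) * pA^j = (pA*pB)^j * (pA^(Suc n) - pB^(Suc n))"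
    by (simp add: s power_add power_mult_distrib algebra_simps)
  also have "\<dots> = (pA*pB)^j * ((pA - pB) * Tp n (pA*pB))"
    by (simp only: pow_diff_Tp[OF pA_pB_sum])
  also have "\<dots> = (\<Sum>k\<le>n div 2. ((-1)^k * of_nat ((n-k) choose k)) * ((pA*pB)^(j+k) * (pA - pB)))"
    unfolding Tp_div2 by (simp add: sum_distrib_left power_add algebra_simps)
  also have "\<dots> = (\<Sum>k\<le>(s - 1) div 2. smult ((-1)^k * of_nat ((s - k - 1) choose k)) (Qp (j+k)))"
    by (simp add: s const_mult_poly Qp_alt)
  finally show ?thesis .
qed

lemma part1:
  assumes "1 \<le> s"
  shows "(Xjs N j s :: nat \<Rightarrow> 'a::comm_ring_1) =
        (\<lambda>x. \<Sum>k\<le>(s - 1) div 2. (-1)^k * of_nat ((s - k - 1) choose k) * Xk N (j + k) x)"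
  unfolding Xjs_coeff pid[OF assms] Xk_coeff by (simp add: coeff_sum fun_eq_iff)

lemma tri:
  fixes f :: "nat \<Rightarrow> 'a::comm_ring_1"
  assumes z: "\<And>i x. i < n \<Longrightarrow> x < i \<Longrightarrow> g i x = 0"
    and o: "\<And>i. i < n \<Longrightarrow> g i i = 1"
    and s: "\<And>x. (\<Sum>i<n. f i * g i x) = 0"
  shows "\<forall>i<n. f i = 0"
proof -
  have "i < n \<longrightarrow> f i = 0" for i
  proof (induction i rule: less_induct)
    case (less j)
    show ?case
    proof
      assume j: "j < n"
      have "0 = (\<Sum>i<n. f i * g i j)" using s by simp
      also have "\<dots> = (\<Sum>i<n. if i = j then f j else 0)"
      proof (rule sum.cong)
        fix i assume i: "i \<in> {..<n}"
        show "f i * g i j = (if i = j then f j else 0)"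
        proof (cases "i < j")
          case True then show ?thesis using less i by auto
        next
          case False then show ?thesis using z[of i j] o[of j] i j by (cases "i = j") auto
        qed
      qed simp
      also have "\<dots> = f j" using j by simp
      finally show "f j = 0" by simp
    qed
  qed
  then show ?thesis by blast
qed

lemma coeff_Qp_low: "x < k \<Longrightarrow> coeff (Qp k :: 'a::comm_ring_1 poly) x = 0"
  by (simp only: Qp_def coeff_diff coeff_P) simp

lemma coeff_Qp_diag: "coeff (Qp k :: 'a::comm_ring_1 poly) k = 1"
  by (simp only: Qp_def coeff_diff coeff_P) simp

lemma part2:
  fixes c :: "nat \<Rightarrow> 'a::comm_ring_1"
  assumes "(\<lambda>x. \<Sum>k<N div 2. c k * Xk N k x) = (\<lambda>x. 0)"
  shows "\<forall>k<N div 2. c k = 0"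
proof (rule tri[where g = "\<lambda>k. coeff (Qp k)"])
  show "\<And>x. (\<Sum>i<N div 2. c i * coeff (Qp i) x) = 0"
    using assms by (simp add: Xk_coeff fun_eq_iff)
qed (auto simp: coeff_Qp_low coeff_Qp_diag)


definition Pt :: "nat \<times> nat \<times> nat \<Rightarrow> 'a::comm_ring_1 poly" where
  "Pt t = (case t of (l,m,k) \<Rightarrow> pB^l * pA^m)"

definition PhiP :: "nat \<Rightarrow> (nat \<times> nat \<times> nat \<Rightarrow> 'a::comm_ring_1) \<Rightarrow> 'a poly" where
  "PhiP N a = (\<Sum>t\<in>Tidx N. smult (a t) (Pt t))"

definition SP :: "nat \<Rightarrow> 'a::comm_ring_1 poly set" where
  "SP N = {p. \<exists>c. p = (\<Sum>k<N div 2. smult (c k) (Qp k))}"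

lemma finite_Tidx: "finite (Tidx N)"
proof (rule finite_subset)
  show "Tidx N \<subseteq> {..N} \<times> {..N} \<times> {..N}" by (auto simp: Tidx_def)
qed auto

definition Wset :: "nat \<Rightarrow> (nat \<times> nat \<times> nat) set" where
  "Wset N = {(l,m,k). l + m + k + 2 = N}"

lemma finite_Wset: "finite (Wset N)"
proof (rule finite_subset)
  show "Wset N \<subseteq> {..N} \<times> {..N} \<times> {..N}" by (auto simp: Wset_def)
qed auto

lemma phiZ_coeff: "(phiZ N a :: nat \<Rightarrow> 'a::comm_ring_1) = coeff (PhiP N a)"
proof (rule ext)
  fix x
  have "(\<lambda>(l,m,k). a (l,m,k) * (ZM l m k x :: 'a)) = (\<lambda>t. a t * coeff (Pt t) x)"
    by (auto simp: fun_eq_iff Pt_def ZM_coeff)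
  then show "phiZ N a x = coeff (PhiP N a) x"
    by (simp add: phiZ_def PhiP_def coeff_sum)
qed

lemma spanX_SP: "v \<in> spanX N \<longleftrightarrow> (\<exists>p\<in>(SP N :: 'a::comm_ring_1 poly set). v = coeff p)"
proof -
  have e: "(\<lambda>x. \<Sum>k<N div 2. c k * Xk N k x) = coeff (\<Sum>k<N div 2. smult (c k) (Qp k :: 'a poly))" for c
    by (simp add: fun_eq_iff coeff_sum Xk_coeff)
  show ?thesis unfolding spanX_def SP_def using e by auto
qed

lemma phiZ_spanX: "(phiZ N a :: nat \<Rightarrow> 'a::comm_ring_1) \<in> spanX N \<longleftrightarrow> PhiP N a \<in> SP N"
  unfolding spanX_SP phiZ_coeff by (auto simp: coeff_inject)

lemma SP_add: "p \<in> SP N \<Longrightarrow> q \<in> SP N \<Longrightarrow> p + q \<in> SP N"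
proof -
  assume "p \<in> SP N" "q \<in> SP N"
  then obtain c d where "p = (\<Sum>k<N div 2. smult (c k) (Qp k))" "q = (\<Sum>k<N div 2. smult (d k) (Qp k))"
    unfolding SP_def by auto
  then have "p + q = (\<Sum>k<N div 2. smult (c k + d k) (Qp k))"
    by (simp add: sum.distrib smult_add_left)
  then show ?thesis unfolding SP_def by (auto intro!: exI[where x="\<lambda>k. c k + d k"])
qed

lemma SP_smult: "p \<in> SP N \<Longrightarrow> smult c p \<in> SP N"
proof -
  assume "p \<in> SP N"
  then obtain d where "p = (\<Sum>k<N div 2. smult (d k) (Qp k))"
    unfolding SP_def by auto
  then have "smult c p = (\<Sum>k<N div 2. smult (c * d k) (Qp k))"
    by (simp add: smult_sum_right)
  then show ?thesis unfolding SP_def by (auto intro!: exI[where x="\<lambda>k. c * d k"])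
qed

lemma SP_zero: "0 \<in> SP N"
  unfolding SP_def by (auto intro!: exI[where x="\<lambda>k. 0"])

lemma SP_uminus: "p \<in> SP N \<Longrightarrow> - p \<in> SP N"
  using SP_smult[of p N "-1"] by simp

lemma SP_diff: "p \<in> SP N \<Longrightarrow> q \<in> SP N \<Longrightarrow> p - q \<in> SP N"
  using SP_add[of p N "-q"] SP_uminus[of q N] by simp

lemma SP_sum: "(\<And>i. i \<in> I \<Longrightarrow> f i \<in> SP N) \<Longrightarrow> (\<Sum>i\<in>I. f i) \<in> SP N"
  by (induction I rule: infinite_finite_induct) (auto simp: SP_zero SP_add)

lemma SP_Qp: "k < N div 2 \<Longrightarrow> Qp k \<in> SP N"
  unfolding SP_def
  by (rule CollectI, rule exI[where x="\<lambda>i. if i = k then 1 else 0"])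
     (simp add: if_distrib[where f="\<lambda>c. smult c _"] cong: if_cong)

lemma Pt_swap_SP:
  assumes "l + m + k + 1 = N"
  shows "Pt (l,m,k) - Pt (m,l,k) \<in> (SP N :: 'a::comm_ring_1 poly set)"
proof -
  have gen: "(pB::'a poly)^j * pA^(j+s) - pB^(j+s) * pA^j \<in> SP N" if "1 \<le> s" "2*j + s + 1 \<le> N" for j s
  proof -
    have "(\<Sum>k\<le>(s - 1) div 2. smult ((-1)^k * of_nat ((s - k - 1) choose k)) (Qp (j+k) :: 'a poly)) \<in> SP N"
    proof (rule SP_sum, rule SP_smult, rule SP_Qp)
      fix i assume "i \<in> {..(s-1) div 2}"
      then have "2 * i + 1 \<le> s" using that(1) by auto
      then show "j + i < N div 2" using that by linarith
    qed
    then show ?thesis unfolding pid[OF that(1)] .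
  qed
  show ?thesis
  proof (cases l m rule: linorder_cases)
    case less
    then show ?thesis using gen[of "m - l" l] assms by (simp add: Pt_def)
  next
    case equal then show ?thesis by (simp add: SP_zero)
  next
    case greater
    then have "Pt (m,l,k) - Pt (l,m,k) \<in> (SP N :: 'a poly set)"
      using gen[of "l - m" m] assms by (simp add: Pt_def)
    then show ?thesis using SP_uminus by fastforce
  qed
qed


definition g1 :: "nat \<times> nat \<times> nat \<Rightarrow> nat \<times> nat \<times> nat \<Rightarrow> 'a::comm_ring_1" where
  "g1 u = (case u of (l,m,k) \<Rightarrow> (\<lambda>t. basisF (l,m,k) t - basisF (m,l,k) t))"

definition g2 :: "nat \<times> nat \<times> nat \<Rightarrow> nat \<times> nat \<times> nat \<Rightarrow> 'a::comm_ring_1" where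
  "g2 u = (case u of (l,m,k) \<Rightarrow> (\<lambda>t. basisF (l,m+1,k) t + basisF (l+1,m,k) t - basisF (l,m,k+1) t))"

lemma Irel_alt: "r \<in> Irel N \<longleftrightarrow>
   (\<exists>a b. r = (\<lambda>t. (\<Sum>u\<in>Tidx N. a u * g1 u t) + (\<Sum>w\<in>Wset N. b w * g2 w t)))"
proof -
  have e1: "(\<lambda>(l,m,k). a (l,m,k) * (basisF (l,m,k) t - basisF (m,l,k) t)) = (\<lambda>u. a u * (g1 u t :: 'a))"
    for a :: "nat \<times> nat \<times> nat \<Rightarrow> 'a" and t
    by (auto simp: fun_eq_iff g1_def)
  have e2: "(\<lambda>(l,m,k). b (l,m,k) * (basisF (l,m+1,k) t + basisF (l+1,m,k) t - basisF (l,m,k+1) t))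
      = (\<lambda>u. b u * (g2 u t :: 'a))"
    for b :: "nat \<times> nat \<times> nat \<Rightarrow> 'a" and t
    by (auto simp: fun_eq_iff g2_def)
  show ?thesis unfolding Irel_def e1 e2 Wset_def by simp
qed

lemma Irel_add: "r \<in> Irel N \<Longrightarrow> q \<in> Irel N \<Longrightarrow> (\<lambda>t. r t + q t) \<in> Irel N"
proof -
  assume "r \<in> Irel N" "q \<in> Irel N"
  then obtain a b a' b' where r: "r = (\<lambda>t. (\<Sum>u\<in>Tidx N. a u * g1 u t) + (\<Sum>w\<in>Wset N. b w * g2 w t))"
    and q: "q = (\<lambda>t. (\<Sum>u\<in>Tidx N. a' u * g1 u t) + (\<Sum>w\<in>Wset N. b' w * g2 w t))"
    unfolding Irel_alt by blast
  have "(\<lambda>t. r t + q t) = (\<lambda>t. (\<Sum>u\<in>Tidx N. (a u + a' u) * g1 u t) + (\<Sum>w\<in>Wset N. (b w + b' w) * g2 w t))"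
    unfolding r q by (simp add: fun_eq_iff sum.distrib algebra_simps)
  then show ?thesis unfolding Irel_alt
    by (intro exI[where x="\<lambda>u. a u + a' u"] exI[where x="\<lambda>u. b u + b' u"])
qed

lemma Irel_smult: "r \<in> Irel N \<Longrightarrow> (\<lambda>t. c * r t) \<in> Irel N"
proof -
  assume "r \<in> Irel N"
  then obtain a b where r: "r = (\<lambda>t. (\<Sum>u\<in>Tidx N. a u * g1 u t) + (\<Sum>w\<in>Wset N. b w * g2 w t))"
    unfolding Irel_alt by blast
  have "(\<lambda>t. c * r t) = (\<lambda>t. (\<Sum>u\<in>Tidx N. (c * a u) * g1 u t) + (\<Sum>w\<in>Wset N. (c * b w) * g2 w t))"
    unfolding r by (simp add: fun_eq_iff sum_distrib_left algebra_simps)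
  then show ?thesis unfolding Irel_alt
    by (intro exI[where x="\<lambda>u. c * a u"] exI[where x="\<lambda>u. c * b u"])
qed

lemma Irel_zero: "(\<lambda>t. 0) \<in> Irel N"
  unfolding Irel_alt by (rule exI[where x="\<lambda>u. 0"], rule exI[where x="\<lambda>u. 0"]) simp

lemma Irel_g1: "u \<in> Tidx N \<Longrightarrow> g1 u \<in> Irel N"
  unfolding Irel_alt
  by (rule exI[where x="\<lambda>w. if w = u then 1 else 0"], rule exI[where x="\<lambda>u. 0"])
     (simp add: fun_eq_iff finite_Tidx if_distrib[where f="\<lambda>c. c * _"] cong: if_cong)

lemma Irel_g2: "u \<in> Wset N \<Longrightarrow> g2 u \<in> Irel N"
  unfolding Irel_alt
  by (rule exI[where x="\<lambda>u. 0"], rule exI[where x="\<lambda>w. if w = u then 1 else 0"])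
     (simp add: fun_eq_iff finite_Wset if_distrib[where f="\<lambda>c. c * _"] cong: if_cong)

lemma PhiP_add: "PhiP N (\<lambda>t. f t + g t) = PhiP N f + PhiP N g"
  by (simp add: PhiP_def smult_add_left sum.distrib)

lemma PhiP_smult: "PhiP N (\<lambda>t. c * f t) = smult c (PhiP N f)"
  by (simp add: PhiP_def smult_sum_right)

lemma PhiP_diff: "PhiP N (\<lambda>t. f t - g t) = PhiP N f - PhiP N g"
  by (simp add: PhiP_def smult_diff_left sum_subtractf)

lemma PhiP_sum: "finite I \<Longrightarrow> PhiP N (\<lambda>t. \<Sum>i\<in>I. f i t) = (\<Sum>i\<in>I. PhiP N (f i))"
  by (simp add: PhiP_def smult_sum sum.swap[of _ I])

lemma PhiP_basis: "u \<in> Tidx N \<Longrightarrow> PhiP N (basisF u) = Pt u"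
  by (simp add: PhiP_def basisF_def finite_Tidx if_distrib[where f="\<lambda>c. smult c _"] cong: if_cong)

lemma PhiP_g1: "u \<in> Tidx N \<Longrightarrow> PhiP N (g1 u) \<in> SP N"
proof -
  assume u: "u \<in> Tidx N"
  obtain l m k where uu: "u = (l,m,k)" by (cases u) auto
  have eq: "PhiP N (g1 u) = Pt (l,m,k) - Pt (m,l,k)"
    using u unfolding uu g1_def by (simp add: PhiP_diff PhiP_basis Tidx_def add.commute add.left_commute)
  have "l + m + k + 1 = N" using u uu by (simp add: Tidx_def)
  from Pt_swap_SP[OF this] show ?thesis unfolding eq .
qed

lemma PhiP_g2: "u \<in> Wset N \<Longrightarrow> PhiP N (g2 u) = 0"
proof -
  assume u: "u \<in> Wset N"
  obtain l m k where uu: "u = (l,m,k)" by (cases u) auto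
  have "PhiP N (g2 u) = Pt (l,m+1,k) + Pt (l+1,m,k) - Pt (l,m,k+1)"
    using u unfolding uu g2_def by (simp add: PhiP_diff PhiP_add PhiP_basis Tidx_def Wset_def)
  also have "\<dots> = pB^l * pA^m * (pA + pB - 1)" by (simp add: Pt_def algebra_simps)
  also have "\<dots> = 0" by (simp add: pA_pB_sum)
  finally show ?thesis .
qed

lemma PhiP_Irel: "r \<in> Irel N \<Longrightarrow> PhiP N r \<in> SP N"
proof -
  assume "r \<in> Irel N"
  then obtain a b where r: "r = (\<lambda>t. (\<Sum>u\<in>Tidx N. a u * g1 u t) + (\<Sum>w\<in>Wset N. b w * g2 w t))"
    unfolding Irel_alt by blast
  have "PhiP N r = (\<Sum>u\<in>Tidx N. smult (a u) (PhiP N (g1 u))) + (\<Sum>w\<in>Wset N. smult (b w) (PhiP N (g2 w)))"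
    unfolding r by (simp add: PhiP_add PhiP_sum PhiP_smult finite_Tidx finite_Wset)
  also have "\<dots> = (\<Sum>u\<in>Tidx N. smult (a u) (PhiP N (g1 u)))"
    by (simp add: PhiP_g2)
  finally show ?thesis
    by (simp add: SP_sum SP_smult PhiP_g1)
qed


definition sN :: "nat \<Rightarrow> (nat \<Rightarrow> 'a::comm_ring_1) \<Rightarrow> nat \<times> nat \<times> nat \<Rightarrow> 'a" where
  "sN N e = (\<lambda>t. \<Sum>i\<in>{N div 2..<N}. e i * basisF (i, N-1-i, 0) t)"

definition Rset :: "nat \<Rightarrow> (nat \<times> nat \<times> nat \<Rightarrow> 'a::comm_ring_1) set" where
  "Rset N = {f. \<exists>e. (\<lambda>t. f t - sN N e t) \<in> Irel N}"

lemma Irel_diff: "r \<in> Irel N \<Longrightarrow> q \<in> Irel N \<Longrightarrow> (\<lambda>t. r t - q t) \<in> Irel N"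
  using Irel_add[of r N "\<lambda>t. (-1) * q t"] Irel_smult[of q N "-1"] by simp

lemma Rset_add: "f \<in> Rset N \<Longrightarrow> g \<in> Rset N \<Longrightarrow> (\<lambda>t. f t + g t) \<in> Rset N"
proof -
  assume "f \<in> Rset N" "g \<in> Rset N"
  then obtain e e' where f: "(\<lambda>t. f t - sN N e t) \<in> Irel N" and g: "(\<lambda>t. g t - sN N e' t) \<in> Irel N"
    unfolding Rset_def by blast
  have "(\<lambda>t. f t + g t - sN N (\<lambda>i. e i + e' i) t) = (\<lambda>t. (f t - sN N e t) + (g t - sN N e' t))"
    by (simp add: fun_eq_iff sN_def sum.distrib algebra_simps)
  then have "(\<lambda>t. f t + g t - sN N (\<lambda>i. e i + e' i) t) \<in> Irel N"
    using Irel_add[OF f g] by simp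
  then show ?thesis unfolding Rset_def by blast
qed

lemma Rset_smult: "f \<in> Rset N \<Longrightarrow> (\<lambda>t. c * f t) \<in> Rset N"
proof -
  assume "f \<in> Rset N"
  then obtain e where f: "(\<lambda>t. f t - sN N e t) \<in> Irel N"
    unfolding Rset_def by blast
  have "(\<lambda>t. c * f t - sN N (\<lambda>i. c * e i) t) = (\<lambda>t. c * (f t - sN N e t))"
    by (simp add: fun_eq_iff sN_def sum_distrib_left algebra_simps)
  then have "(\<lambda>t. c * f t - sN N (\<lambda>i. c * e i) t) \<in> Irel N"
    using Irel_smult[OF f] by simp
  then show ?thesis unfolding Rset_def by blast
qed

lemma Rset_Irel: "f \<in> Rset N \<Longrightarrow> (\<lambda>t. g t - f t) \<in> Irel N \<Longrightarrow> g \<in> Rset N"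
proof -
  assume "f \<in> Rset N" and gf: "(\<lambda>t. g t - f t) \<in> Irel N"
  then obtain e where f: "(\<lambda>t. f t - sN N e t) \<in> Irel N"
    unfolding Rset_def by blast
  have "(\<lambda>t. g t - sN N e t) = (\<lambda>t. (g t - f t) + (f t - sN N e t))" by (simp add: fun_eq_iff)
  then have "(\<lambda>t. g t - sN N e t) \<in> Irel N" using Irel_add[OF gf f] by simp
  then show ?thesis unfolding Rset_def by blast
qed

lemma Rset_sN: "sN N e \<in> Rset N"
  unfolding Rset_def using Irel_zero[of N] by (intro CollectI exI[where x=e]) simp

lemma basis_sN: "N div 2 \<le> i \<Longrightarrow> i < N \<Longrightarrow> basisF (i, N-1-i, 0) = (sN N (\<lambda>j. if j = i then 1 else 0) :: _ \<Rightarrow> 'a::comm_ring_1)"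
  unfolding sN_def
  by (simp add: fun_eq_iff if_distrib[where f="\<lambda>c. c * _"] cong: if_cong)

lemma Rset_basis: "l + m + k + 1 = N \<Longrightarrow> (basisF (l,m,k) :: _ \<Rightarrow> 'a::comm_ring_1) \<in> Rset N"
proof (induction k arbitrary: l m)
  case 0
  show ?case
  proof (cases "N div 2 \<le> l")
    case True
    then have "m = N - 1 - l" "l < N" using 0 by auto
    then show ?thesis using basis_sN[OF True] Rset_sN by metis
  next
    case False
    then have m: "N div 2 \<le> m" "m < N" "l = N - 1 - m" using 0 by auto
    have "(basisF (m,l,0) :: _ \<Rightarrow> 'a) \<in> Rset N" using basis_sN[OF m(1,2)] Rset_sN m(3) by metis
    moreover have "(\<lambda>t. basisF (l,m,0) t - basisF (m,l,0) t) \<in> (Irel N :: (_ \<Rightarrow> 'a) set)"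
      using Irel_g1[of "(l,m,0)" N] 0 by (simp add: g1_def Tidx_def)
    ultimately show ?thesis by (rule Rset_Irel)
  qed
next
  case (Suc k)
  have a: "(basisF (l,m+1,k) :: _ \<Rightarrow> 'a) \<in> Rset N" using Suc.IH[of l "m+1"] Suc.prems by simp
  have b: "(basisF (l+1,m,k) :: _ \<Rightarrow> 'a) \<in> Rset N" using Suc.IH[of "l+1" m] Suc.prems by simp
  have ab: "(\<lambda>t. basisF (l,m+1,k) t + basisF (l+1,m,k) t :: 'a) \<in> Rset N" by (rule Rset_add[OF a b])
  have "(g2 (l,m,k) :: _ \<Rightarrow> 'a) \<in> Irel N" using Suc.prems by (intro Irel_g2) (simp add: Wset_def)
  then have "(\<lambda>t. (-1) * g2 (l,m,k) t :: 'a) \<in> Irel N" by (rule Irel_smult)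
  moreover have "(\<lambda>t. (-1) * g2 (l,m,k) t :: 'a) = (\<lambda>t. basisF (l,m,Suc k) t - (basisF (l,m+1,k) t + basisF (l+1,m,k) t))"
    by (simp add: g2_def fun_eq_iff)
  ultimately have "(\<lambda>t. basisF (l,m,Suc k) t - (basisF (l,m+1,k) t + basisF (l+1,m,k) t) :: 'a) \<in> Irel N"
    by simp
  then show ?case by (rule Rset_Irel[OF ab])
qed

lemma Rset_sum:
  fixes f :: "'b \<Rightarrow> nat \<times> nat \<times> nat \<Rightarrow> 'a::comm_ring_1"
  shows "finite U \<Longrightarrow> (\<And>u. u \<in> U \<Longrightarrow> f u \<in> Rset N) \<Longrightarrow> (\<lambda>t. \<Sum>u\<in>U. f u t) \<in> Rset N"
proof (induction U rule: finite_induct)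
  case empty
  have z: "(\<lambda>t::nat\<times>nat\<times>nat. 0::'a) = sN N (\<lambda>i. 0)" by (simp add: sN_def fun_eq_iff)
  show ?case unfolding sum.empty z by (rule Rset_sN)
next
  case (insert x F)
  have e: "(\<lambda>t. \<Sum>u\<in>insert x F. f u t) = (\<lambda>t. f x t + (\<Sum>u\<in>F. f u t))"
    using insert(1,2) by simp
  show ?case unfolding e
    by (rule Rset_add) (use insert in auto)
qed

lemma FF_expand: "a \<in> FF N \<Longrightarrow> a = (\<lambda>t. \<Sum>u\<in>Tidx N. a u * basisF u t)"
proof (rule ext)
  fix t assume a: "a \<in> FF N"
  have "(\<Sum>u\<in>Tidx N. a u * basisF u t) = (\<Sum>u\<in>Tidx N. if u = t then a t else 0)"
    by (rule sum.cong) (auto simp: basisF_def)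
  also have "\<dots> = (if t \<in> Tidx N then a t else 0)" by (simp add: finite_Tidx)
  also have "\<dots> = a t" using a by (cases t) (auto simp: FF_def)
  finally show "a t = (\<Sum>u\<in>Tidx N. a u * basisF u t)" by simp
qed

lemma FF_Rset: "a \<in> FF N \<Longrightarrow> (a :: _ \<Rightarrow> 'a::comm_ring_1) \<in> Rset N"
proof -
  assume a: "a \<in> FF N"
  have "(\<lambda>t. \<Sum>u\<in>Tidx N. a u * basisF u t) \<in> Rset N"
  proof (rule Rset_sum[OF finite_Tidx])
    fix u assume "u \<in> Tidx N"
    then obtain l m k where "u = (l,m,k)" "l + m + k + 1 = N" by (auto simp: Tidx_def)
    then have "basisF u \<in> Rset N" using Rset_basis by blast
    then show "(\<lambda>t. a u * basisF u t) \<in> Rset N" by (rule Rset_smult)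
  qed
  then show ?thesis using FF_expand[OF a] by simp
qed


lemma PhiP_sN: "PhiP N (sN N e) = (\<Sum>i\<in>{N div 2..<N}. smult (e i) (pB^i * pA^(N-1-i)))"
proof -
  have "PhiP N (sN N e) = (\<Sum>i\<in>{N div 2..<N}. smult (e i) (PhiP N (basisF (i, N-1-i, 0))))"
    unfolding sN_def by (simp add: PhiP_sum PhiP_smult)
  also have "\<dots> = (\<Sum>i\<in>{N div 2..<N}. smult (e i) (pB^i * pA^(N-1-i)))"
    by (rule sum.cong) (auto simp: PhiP_basis Tidx_def Pt_def)
  finally show ?thesis .
qed

lemma tri_final:
  assumes "(\<Sum>i\<in>{N div 2..<N}. smult (e i) (pB^i * pA^(N-1-i))) \<in> (SP N :: 'a::comm_ring_1 poly set)"
  shows "\<forall>i\<in>{N div 2..<N}. e i = 0"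
proof -
  obtain c where c: "(\<Sum>i\<in>{N div 2..<N}. smult (e i) (pB^i * pA^(N-1-i))) = (\<Sum>k<N div 2. smult (c k) (Qp k :: 'a poly))"
    using assms unfolding SP_def by auto
  define g where "g i = (if i < N div 2 then coeff (Qp i :: 'a poly) else coeff (pB^i * pA^(N-1-i) :: 'a poly))" for i
  define f where "f i = (if i < N div 2 then c i else - e i)" for i
  have un: "{..<N} = {..<N div 2} \<union> {N div 2..<N}" by auto
  have "\<forall>i<N. f i = 0"
  proof (rule tri[where g = g])
    fix x
    have "(\<Sum>i<N. f i * g i x) = (\<Sum>i<N div 2. f i * g i x) + (\<Sum>i\<in>{N div 2..<N}. f i * g i x)"
      unfolding un by (rule sum.union_disjoint) auto
    also have "\<dots> = (\<Sum>i<N div 2. c i * coeff (Qp i) x) - (\<Sum>i\<in>{N div 2..<N}. e i * coeff (pB^i * pA^(N-1-i)) x)"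
      by (simp add: f_def g_def sum_negf)
    also have "\<dots> = 0"
      using arg_cong[OF c, of "\<lambda>p. coeff p x"] by (simp add: coeff_sum)
    finally show "(\<Sum>i<N. f i * g i x) = 0" .
  next
    fix i x assume "i < N" "x < i"
    then show "g i x = 0" by (simp add: g_def coeff_Qp_low coeff_P)
  next
    fix i assume "i < N"
    then show "g i i = 1" by (simp add: g_def coeff_Qp_diag coeff_P)
  qed
  then show ?thesis by (auto simp: f_def)
qed

lemma part3:
  assumes a: "a \<in> (FF N :: (nat \<times> nat \<times> nat \<Rightarrow> 'a::comm_ring_1) set)"
  shows "phiZ N a \<in> spanX N \<longleftrightarrow> a \<in> Irel N"
proof
  assume "a \<in> Irel N"
  then show "phiZ N a \<in> spanX N" by (simp add: phiZ_spanX PhiP_Irel)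
next
  assume "phiZ N a \<in> spanX N"
  then have pa: "PhiP N a \<in> SP N" by (simp add: phiZ_spanX)
  obtain e where e: "(\<lambda>t. a t - sN N e t) \<in> Irel N"
    using FF_Rset[OF a] unfolding Rset_def by blast
  have "PhiP N a - PhiP N (sN N e) \<in> SP N"
    using PhiP_Irel[OF e] by (simp add: PhiP_diff)
  then have "PhiP N a - (PhiP N a - PhiP N (sN N e)) \<in> SP N"
    using pa SP_diff by blast
  then have "PhiP N (sN N e) \<in> SP N" by simp
  then have ez: "\<forall>i\<in>{N div 2..<N}. e i = 0" using tri_final PhiP_sN by metis
  have "sN N e = (\<lambda>t. 0)" unfolding sN_def using ez by (simp add: fun_eq_iff)
  then show "a \<in> Irel N" using e by simp
qed

lemma part4:
  assumes v: "v \<in> (FM N :: (nat \<Rightarrow> 'a::comm_ring_1) set)"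
  shows "\<exists>a \<in> FF N. (\<lambda>x. v x - phiZ N a x) \<in> spanX N"
proof -
  define a where "a = (\<lambda>t. \<Sum>l<N. v l * basisF (l, 0, N-1-l) t)"
  have aF: "a \<in> FF N"
    unfolding FF_def
  proof (intro CollectI allI impI)
    fix t assume "t \<notin> Tidx N"
    then have "\<forall>l\<in>{..<N}. t \<noteq> (l,0,N-1-l)" by (auto simp: Tidx_def)
    then show "a t = 0" unfolding a_def basisF_def by (intro sum.neutral) auto
  qed
  have "PhiP N a = (\<Sum>l<N. smult (v l) (PhiP N (basisF (l, 0, N-1-l))))"
    unfolding a_def by (simp add: PhiP_sum PhiP_smult)
  also have "\<dots> = (\<Sum>l<N. smult (v l) (pB^l))"
    by (rule sum.cong) (auto simp: PhiP_basis Tidx_def Pt_def)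
  finally have pa: "PhiP N a = (\<Sum>l<N. smult (v l) (pB^l))" .
  have "phiZ N a = v"
  proof (rule ext)
    fix x
    have "phiZ N a x = (\<Sum>l<N. v l * (if l = x then 1 else 0))"
      by (simp add: phiZ_coeff pa coeff_sum pB_pow)
    also have "\<dots> = (\<Sum>l<N. if l = x then v x else 0)" by (rule sum.cong) auto
    also have "\<dots> = v x" using v by (auto simp: FM_def)
    finally show "phiZ N a x = v x" .
  qed
  moreover have "(\<lambda>x. 0) \<in> (spanX N :: (nat \<Rightarrow> 'a) set)"
    unfolding spanX_def by (auto intro!: exI[where x="\<lambda>k. 0"])
  ultimately have "(\<lambda>x. v x - phiZ N a x) \<in> spanX N" by simp
  then show ?thesis using aF by blast
qed

theorem mainTheorem7:
  fixes N :: nat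
  assumes "N \<ge> 2"
  shows
    "(\<forall>j s. 1 \<le> s \<longrightarrow> 2*j + s \<le> N - 1 \<longrightarrow>
        (Xjs N j s :: nat \<Rightarrow> 'a::comm_ring_1) =
        (\<lambda>x. \<Sum>k\<le>(s - 1) div 2. (-1)^k * of_nat ((s - k - 1) choose k) * Xk N (j + k) x))
   \<and> (\<forall>c :: nat \<Rightarrow> 'a. (\<lambda>x. \<Sum>k<N div 2. c k * Xk N k x) = (\<lambda>x. 0)
        \<longrightarrow> (\<forall>k<N div 2. c k = 0))
   \<and> (\<forall>a \<in> (FF N :: (nat \<times> nat \<times> nat \<Rightarrow> 'a) set). phiZ N a \<in> spanX N \<longleftrightarrow> a \<in> Irel N)
   \<and> (\<forall>v \<in> (FM N :: (nat \<Rightarrow> 'a) set). \<exists>a \<in> FF N. (\<lambda>x. v x - phiZ N a x) \<in> spanX N)"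
  apply (intro conjI)
  subgoal using part1 by blast
  subgoal using part2 by blast
  subgoal using part3 by blast
  subgoal using part4 by blast
  done

end
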